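(* Let $m$ be an odd natural number and $\underline R_m=N_{D_2}^{D_{2m}}\underline{\mathbb Z}$. Then $\underline R_m(D_{2m}/D_{2m})$ is a free abelian group \[ \underline R_m(D_{2m}/D_{2m})\cong\mathbb Z\{[D_{2m}/D_{2k}]\mid k\text{ divides }m\}.\] Under the quotient map $\underline A^{D_{2m}}\to\underline R_m$, the image of $[D_{2m}/D_{2k}]$ is $[D_{2m}/D_{2k}]$ and the image of $[D_{2m}/\mu_k]$ is $2[D_{2m}/D_{2k}]$.
   Context: $D_{2m}=\langle\tau,\zeta_m\mid\tau^2=\zeta_m^m=(\tau\zeta_m)^2=1\rangle$, $D_2=\langle\tau\rangle$, $\mu_k=\langle\zeta_k\rangle$, $D_{2k}=\langle\tau,\zeta_k\rangle$ for $k\mid m$. $\underline{\mathbb Z}$ is the constant $D_2$-Mackey functor, and Mackey norms are $N_H^G\underline M=\underline\pi_0^GN_H^GH\underline M$; there is an isomorphism $N_{D_2}^{D_{2m}}\underline{\mathbb Z}\cong\underline A^{D_{2m}}/(2-[D_{2m}/\mu_m])$, the quotient of the Burnside Mackey functor by the congruence generated by $2-[D_{2m}/\mu_m]$, and the quotient map refers to this presentation. $[T]$ denotes the class of a finite $D_{2m}$-set $T$ in the Burnside ring $\underline A^{D_{2m}}(D_{2m}/D_{2m})$. *)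

theory Defs
  imports "HOL-Algebra.Algebra"
begin

text \<open>Convention: an element of the Burnside ring A(H) of a subgroup H of G is
represented by its mark function L \<mapsto> |X^L| (L ranging over subgroups of H; value 0
elsewhere).  The mark homomorphism is injective, so this is a faithful model of A(H).\<close>

definition subgrps :: "('a,'b) monoid_scheme \<Rightarrow> 'a set \<Rightarrow> 'a set set" where
  "subgrps G H = {K. K \<subseteq> H \<and> subgroup K G}"

definition conjset :: "('a,'b) monoid_scheme \<Rightarrow> 'a \<Rightarrow> 'a set \<Rightarrow> 'a set" where
  "conjset G g S = (\<lambda>s. g \<otimes>\<^bsub>G\<^esub> s \<otimes>\<^bsub>G\<^esub> inv\<^bsub>G\<^esub> g) ` S"

definition mark :: "('a,'b) monoid_scheme \<Rightarrow> 'a set \<Rightarrow> 'a set \<Rightarrow> 'a set \<Rightarrow> nat" where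
  "mark G H K L = card {C. (\<exists>h\<in>H. C = h <#\<^bsub>G\<^esub> K) \<and> (\<forall>l\<in>L. l <#\<^bsub>G\<^esub> C = C)}"

definition cls :: "('a,'b) monoid_scheme \<Rightarrow> 'a set \<Rightarrow> 'a set \<Rightarrow> 'a set \<Rightarrow> int" where
  "cls G H K = (\<lambda>L. if L \<in> subgrps G H then int (mark G H K L) else 0)"

definition burnside :: "('a,'b) monoid_scheme \<Rightarrow> 'a set \<Rightarrow> ('a set \<Rightarrow> int) set" where
  "burnside G H = {f. \<exists>c. f = (\<lambda>L. \<Sum>K\<in>subgrps G H. c K * cls G H K L)}"

definition res :: "('a,'b) monoid_scheme \<Rightarrow> 'a set \<Rightarrow> ('a set \<Rightarrow> int) \<Rightarrow> ('a set \<Rightarrow> int)" where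
  "res G K f = (\<lambda>L. if L \<in> subgrps G K then f L else 0)"

definition conjB :: "('a,'b) monoid_scheme \<Rightarrow> 'a set \<Rightarrow> 'a \<Rightarrow> ('a set \<Rightarrow> int) \<Rightarrow> ('a set \<Rightarrow> int)" where
  "conjB G H g f = (\<lambda>L. if L \<in> subgrps G (conjset G g H) then f (conjset G (inv\<^bsub>G\<^esub> g) L) else 0)"

text \<open>transfer (induction) tr_K^H : A(K) \<rightarrow> A(H), mark formula
  phi_L(H \<times>_K X) = sum over cosets hK with L \<subseteq> hKh^-1 of phi_{h^-1 L h}(X)\<close>
definition tr :: "('a,'b) monoid_scheme \<Rightarrow> 'a set \<Rightarrow> 'a set \<Rightarrow> ('a set \<Rightarrow> int) \<Rightarrow> ('a set \<Rightarrow> int)" where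
  "tr G K H f = (\<lambda>L. if L \<in> subgrps G H then
      (\<Sum>h\<in>{h\<in>H. L \<subseteq> conjset G h K}. f (conjset G (inv\<^bsub>G\<^esub> h) L)) div int (card K) else 0)"

text \<open>The ideal (congruence) of the Burnside Mackey functor generated by an element x of
A(G/G): pairs (H, f) with f in the ideal at level G/H.\<close>
inductive_set mackey_ideal :: "('a,'b) monoid_scheme \<Rightarrow> ('a set \<Rightarrow> int) \<Rightarrow> ('a set \<times> ('a set \<Rightarrow> int)) set"
  for G x where
  base: "(carrier G, x) \<in> mackey_ideal G x"
| add: "(H, f) \<in> mackey_ideal G x \<Longrightarrow> (H, g) \<in> mackey_ideal G x \<Longrightarrow> (H, \<lambda>L. f L + g L) \<in> mackey_ideal G x"
| neg: "(H, f) \<in> mackey_ideal G x \<Longrightarrow> (H, \<lambda>L. - f L) \<in> mackey_ideal G x"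
| mult: "(H, f) \<in> mackey_ideal G x \<Longrightarrow> a \<in> burnside G H \<Longrightarrow> (H, \<lambda>L. a L * f L) \<in> mackey_ideal G x"
| restr: "(H, f) \<in> mackey_ideal G x \<Longrightarrow> K \<in> subgrps G H \<Longrightarrow> (K, res G K f) \<in> mackey_ideal G x"
| transf: "(K, f) \<in> mackey_ideal G x \<Longrightarrow> K \<in> subgrps G H \<Longrightarrow> H \<in> subgrps G (carrier G)
           \<Longrightarrow> (H, tr G K H f) \<in> mackey_ideal G x"
| conjg: "(H, f) \<in> mackey_ideal G x \<Longrightarrow> g \<in> carrier G \<Longrightarrow> (conjset G g H, conjB G H g f) \<in> mackey_ideal G x"

text \<open>(j, e) stands for zeta_m^j tau^e, with tau zeta = zeta^-1 tau.\<close>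
definition dihedral :: "nat \<Rightarrow> (nat \<times> bool) monoid" where
  "dihedral m = (| carrier = {0..<m} \<times> UNIV,
      monoid.mult = (\<lambda>a b. ((if snd a then fst a + m - fst b else fst a + fst b) mod m, snd a \<noteq> snd b)),
      monoid.one = (0, False) |)"

text \<open>mu_k = < zeta_k > with zeta_k = zeta_m^(m/k), for k dividing m\<close>
definition mu :: "nat \<Rightarrow> nat \<Rightarrow> (nat \<times> bool) set" where
  "mu m k = {(j, False) | j. j < m \<and> (m div k) dvd j}"

text \<open>D_{2k} = < tau, zeta_k >\<close>
definition dih :: "nat \<Rightarrow> nat \<Rightarrow> (nat \<times> bool) set" where
  "dih m k = {(j, e) | j e. j < m \<and> (m div k) dvd j}"

end

theory Submission
  imports Defs "HOL-Algebra.Left_Coset"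
begin

lemma dmult: "(a,e) \<otimes>\<^bsub>dihedral m\<^esub> (b,f) = ((if e then a + m - b else a + b) mod m, e \<noteq> f)"
  by (simp add: dihedral_def)
lemma dcarrier: "carrier (dihedral m) = {0..<m} \<times> UNIV"
  by (simp add: dihedral_def)
lemma dmone: "\<one>\<^bsub>dihedral m\<^esub> = (0, False)"
  by (simp add: dihedral_def)

lemma dgroup: assumes "m > 0" shows "group (dihedral m)"
proof (rule groupI)
  show "\<one>\<^bsub>dihedral m\<^esub> \<in> carrier (dihedral m)" using assms by (simp add: dcarrier dmone)
next
  fix x y assume "x \<in> carrier (dihedral m)" "y \<in> carrier (dihedral m)"
  then show "x \<otimes>\<^bsub>dihedral m\<^esub> y \<in> carrier (dihedral m)" using assms
    by (cases x; cases y) (simp add: dcarrier dmult)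
next
  fix x assume "x \<in> carrier (dihedral m)"
  then show "\<one>\<^bsub>dihedral m\<^esub> \<otimes>\<^bsub>dihedral m\<^esub> x = x"
    by (cases x) (simp add: dcarrier dmult dmone)
next
  fix x assume "x \<in> carrier (dihedral m)"
  then obtain a e where x: "x = (a,e)" "a < m" by (cases x) (auto simp: dcarrier)
  show "\<exists>y\<in>carrier (dihedral m). y \<otimes>\<^bsub>dihedral m\<^esub> x = \<one>\<^bsub>dihedral m\<^esub>"
  proof (cases e)
    case True
    then show ?thesis using x by (intro bexI[of _ "(a,True)"]) (auto simp: dcarrier dmult dmone)
  next
    case False
    have "((m - a) mod m + a) mod m = 0"
      using x by (metis add.commute add_diff_inverse_nat less_imp_not_less mod_add_left_eq mod_self)
    then show ?thesis using x False assms
      by (intro bexI[of _ "((m-a) mod m,False)"]) (auto simp: dcarrier dmult dmone)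
  qed
next
  fix x y z assume "x \<in> carrier (dihedral m)" "y \<in> carrier (dihedral m)" "z \<in> carrier (dihedral m)"
  then obtain a e b f c g where xyz: "x = (a,e)" "y = (b,f)" "z = (c,g)" "a < m" "b < m" "c < m"
    by (cases x; cases y; cases z) (auto simp: dcarrier)
  have i1: "\<And>a b. b < m \<Longrightarrow> int ((a + m - b) mod m) = (int a - int b) mod int m"
    by (simp add: of_nat_mod of_nat_diff) (smt (verit) mod_add_self2)
  have i2: "\<And>a b. int ((a + b) mod m) = (int a + int b) mod int m"
    by (simp add: of_nat_mod)
  have lt: "\<And>a. a mod m < m" using assms by simp
  have F: "\<And>u v. fst v < m \<Longrightarrow> int (fst (u \<otimes>\<^bsub>dihedral m\<^esub> v)) = (if snd u then int (fst u) - int (fst v) else int (fst u) + int (fst v)) mod int m"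
    subgoal for u v by (cases u; cases v) (simp add: dmult i1 i2)
    done
  have S: "\<And>u v. snd (u \<otimes>\<^bsub>dihedral m\<^esub> v) = (snd u \<noteq> snd v)" "\<And>u v. fst (u \<otimes>\<^bsub>dihedral m\<^esub> v) < m"
    subgoal for u v by (cases u; cases v) (simp add: dmult)
    subgoal for u v by (cases u; cases v) (simp add: dmult lt)
    done
  have "int (fst (x \<otimes>\<^bsub>dihedral m\<^esub> y \<otimes>\<^bsub>dihedral m\<^esub> z)) = int (fst (x \<otimes>\<^bsub>dihedral m\<^esub> (y \<otimes>\<^bsub>dihedral m\<^esub> z)))"
    using xyz by (cases e; cases f; cases g) (simp_all add: F S mod_simps algebra_simps)
  then show "x \<otimes>\<^bsub>dihedral m\<^esub> y \<otimes>\<^bsub>dihedral m\<^esub> z = x \<otimes>\<^bsub>dihedral m\<^esub> (y \<otimes>\<^bsub>dihedral m\<^esub> z)"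
    by (intro prod_eqI) (auto simp: S(1))
qed

locale dihm = fixes m :: nat assumes odd: "odd m"
begin

abbreviation "D \<equiv> dihedral m"

lemma mpos: "m > 0" using odd by (cases m) auto

lemma grp: "group D" using dgroup mpos by blast

lemma inv_rot: "a < m \<Longrightarrow> inv\<^bsub>D\<^esub> (a, False) = ((m - a) mod m, False)"
  apply (rule group.inv_equality[OF grp])
  using mpos apply (auto simp: dmult dmone dcarrier)
  by (metis add.commute le_add_diff_inverse less_imp_le_nat mod_add_left_eq mod_self)

lemma inv_ref: "a < m \<Longrightarrow> inv\<^bsub>D\<^esub> (a, True) = (a, True)"
  by (auto intro!: group.inv_equality[OF grp] simp: dmult dmone dcarrier)

lemma md1: "b < m \<Longrightarrow> int ((a + m - b) mod m) = (int a - int b) mod int m"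
  by (simp add: of_nat_mod of_nat_diff) (smt (verit) mod_add_self2)
lemma md2: "int ((a + b) mod m) = (int a + int b) mod int m"
  by (simp add: of_nat_mod)
lemma md3: "j < m \<Longrightarrow> int ((m - j) mod m) = (- int j) mod int m"
  by (simp add: of_nat_mod of_nat_diff)

lemma conj_rot:
  assumes "j < m" "g \<in> carrier D"
  shows "g \<otimes>\<^bsub>D\<^esub> (j, False) \<otimes>\<^bsub>D\<^esub> inv\<^bsub>D\<^esub> g = (if snd g then (m - j) mod m else j, False)"
proof -
  obtain s e where g: "g = (s,e)" "s < m" using assms by (cases g) (auto simp: dcarrier)
  show ?thesis
  proof (cases e)
    case True
    then show ?thesis using g assms
      by (simp add: inv_ref dmult, subst int_int_eq[symmetric], simp add: md1 md3 mod_simps)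
  next
    case False
    then show ?thesis using g assms
      apply (simp add: inv_rot dmult)
      apply (rule int_int_eq[THEN iffD1])
      apply (simp only: md1 md2 md3)
      apply (simp add: mod_simps)
      done
  qed
qed

end

sublocale dihm \<subseteq> DG: group "dihedral m" by (rule dihm.grp[OF dihm_axioms])
context dihm begin

lemma mem_mu: "x \<in> mu m k \<longleftrightarrow> snd x = False \<and> fst x < m \<and> (m div k) dvd fst x"
  by (cases x) (auto simp: mu_def)
lemma mem_dih: "x \<in> dih m k \<longleftrightarrow> fst x < m \<and> (m div k) dvd fst x"
  by (cases x) (auto simp: dih_def)

lemma qdvd: "k dvd m \<Longrightarrow> (m div k) dvd m"
  by (metis dvd_div_eq_0_iff dvd_mult_div_cancel dvd_triv_right mpos less_numeral_extra(3) dvd_refl)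

lemma dvd1: "q dvd m \<Longrightarrow> q dvd a \<Longrightarrow> q dvd b \<Longrightarrow> b < m \<Longrightarrow> q dvd (a + m - b) mod m"
  by (simp add: dvd_diff_nat dvd_mod)
lemma dvd2: "q dvd m \<Longrightarrow> q dvd a \<Longrightarrow> q dvd b \<Longrightarrow> q dvd (a + b) mod m"
  by (simp add: dvd_mod)
lemma dvd3: "q dvd m \<Longrightarrow> q dvd a \<Longrightarrow> q dvd (m - a) mod m"
  by (simp add: dvd_diff_nat dvd_mod)

lemma mu_sub: assumes "k dvd m" shows "subgroup (mu m k) D"
proof (rule group.subgroupI[OF grp])
  have q: "(m div k) dvd m" using qdvd assms .
  show "mu m k \<subseteq> carrier D" by (auto simp: mem_mu dcarrier)
  show "mu m k \<noteq> {}" using mpos by (auto simp: mu_def)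
  fix a assume "a \<in> mu m k" then show "inv\<^bsub>D\<^esub> a \<in> mu m k"
    using q by (cases a) (auto simp: mem_mu inv_rot dvd3 mpos)
next
  have q: "(m div k) dvd m" using qdvd assms .
  fix a b assume "a \<in> mu m k" "b \<in> mu m k" then show "a \<otimes>\<^bsub>D\<^esub> b \<in> mu m k"
    using q mpos by (cases a; cases b) (auto simp: mem_mu dmult dvd2)
qed

lemma dih_sub: assumes "k dvd m" shows "subgroup (dih m k) D"
proof (rule group.subgroupI[OF grp])
  have q: "(m div k) dvd m" using qdvd assms .
  show "dih m k \<subseteq> carrier D" by (auto simp: mem_dih dcarrier)
  show "dih m k \<noteq> {}" using mpos by (auto simp: dih_def)
  fix a assume "a \<in> dih m k" then show "inv\<^bsub>D\<^esub> a \<in> dih m k"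
    using q by (cases a; cases "snd a") (auto simp: mem_dih inv_rot inv_ref dvd3 mpos)
next
  have q: "(m div k) dvd m" using qdvd assms .
  fix a b assume "a \<in> dih m k" "b \<in> dih m k" then show "a \<otimes>\<^bsub>D\<^esub> b \<in> dih m k"
    using q mpos by (cases a; cases b) (auto simp: mem_dih dmult dvd1 dvd2)
qed

lemma conj_mu: assumes "k dvd m" "x \<in> mu m k" "g \<in> carrier D"
  shows "g \<otimes>\<^bsub>D\<^esub> x \<otimes>\<^bsub>D\<^esub> inv\<^bsub>D\<^esub> g \<in> mu m k"
proof -
  have q: "(m div k) dvd m" using qdvd assms(1) .
  obtain j where x: "x = (j, False)" "j < m" "(m div k) dvd j" using assms(2) by (cases x) (auto simp: mem_mu)
  show ?thesis unfolding x(1) conj_rot[OF x(2) assms(3)] using x q mpos by (auto simp: mem_mu dvd3)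
qed

lemma conjset_mu: assumes "k dvd m" "g \<in> carrier D" shows "conjset D g (mu m k) = mu m k"
proof
  show "conjset D g (mu m k) \<subseteq> mu m k" using conj_mu[OF assms(1) _ assms(2)] by (auto simp: conjset_def)
  show "mu m k \<subseteq> conjset D g (mu m k)"
  proof
    fix x assume x: "x \<in> mu m k"
    have xc: "x \<in> carrier D" using x mu_sub[OF assms(1)] subgroup.subset by blast
    have ig: "inv\<^bsub>D\<^esub> g \<in> carrier D" using grp assms(2) by simp
    have y: "inv\<^bsub>D\<^esub> g \<otimes>\<^bsub>D\<^esub> x \<otimes>\<^bsub>D\<^esub> inv\<^bsub>D\<^esub> (inv\<^bsub>D\<^esub> g) \<in> mu m k"
      using conj_mu[OF assms(1) x ig] .
    have "x = g \<otimes>\<^bsub>D\<^esub> (inv\<^bsub>D\<^esub> g \<otimes>\<^bsub>D\<^esub> x \<otimes>\<^bsub>D\<^esub> inv\<^bsub>D\<^esub> (inv\<^bsub>D\<^esub> g)) \<otimes>\<^bsub>D\<^esub> inv\<^bsub>D\<^esub> g"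
      using assms(2) xc by (simp add: DG.m_assoc) (metis DG.inv_closed DG.m_assoc DG.r_inv DG.l_one)
    then show "x \<in> conjset D g (mu m k)" using y unfolding conjset_def by blast
  qed
qed

end


lemma (in group) cancel_l [simp]:
  "x \<in> carrier G \<Longrightarrow> y \<in> carrier G \<Longrightarrow> inv x \<otimes> (x \<otimes> y) = y"
  "x \<in> carrier G \<Longrightarrow> y \<in> carrier G \<Longrightarrow> x \<otimes> (inv x \<otimes> y) = y"
  by (simp_all add: m_assoc[symmetric])

lemma (in group) lcos_eq:
  assumes "subgroup K G" "a \<in> carrier G" "b \<in> carrier G"
  shows "(a <# K = b <# K) \<longleftrightarrow> inv b \<otimes> a \<in> K"
proof
  assume "a <# K = b <# K"
  then have "a \<in> b <# K" using lcos_self[OF assms(2,1)] by simp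
  then show "inv b \<otimes> a \<in> K" using subgroup.lcos_module_imp[OF assms(1) is_group assms(3)] by blast
next
  assume "inv b \<otimes> a \<in> K"
  then have "a \<in> b <# K" using subgroup.lcos_module_rev[OF assms(1) is_group assms(3,2)] by blast
  then show "a <# K = b <# K" using l_repr_independence[OF _ assms(3,1)] by simp
qed

lemma (in group) lcos_fix:
  assumes "subgroup K G" "h \<in> carrier G" "l \<in> carrier G"
  shows "(l <# (h <# K) = h <# K) \<longleftrightarrow> inv h \<otimes> l \<otimes> h \<in> K"
  using lcos_m_assoc[OF subgroup.subset[OF assms(1)] assms(3,2)] lcos_eq[OF assms(1) _ assms(2)] assms
  by (simp add: m_assoc)

lemma (in group) mark_formula:
  assumes "subgroup K G" "L \<subseteq> carrier G"
    and P: "\<And>h. h \<in> carrier G \<Longrightarrow> (\<forall>l\<in>L. inv h \<otimes> l \<otimes> h \<in> K) \<longleftrightarrow> P"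
  shows "mark G (carrier G) K L = (if P then card (lcosets K) else 0)"
proof -
  have "{C. (\<exists>h\<in>carrier G. C = h <# K) \<and> (\<forall>l\<in>L. l <# C = C)} = (if P then lcosets K else {})"
  proof (cases P)
    case True
    have "C \<in> lcosets K \<Longrightarrow> (\<forall>l\<in>L. l <# C = C)" for C
    proof -
      assume "C \<in> lcosets K"
      then obtain h where h: "h \<in> carrier G" "C = h <# K" unfolding LCOSETS_def by blast
      show ?thesis using lcos_fix[OF assms(1) h(1)] P[OF h(1)] True h(2) assms(2) by blast
    qed
    then show ?thesis using True unfolding LCOSETS_def by auto
  next
    case False
    have "\<not> ((\<exists>h\<in>carrier G. C = h <# K) \<and> (\<forall>l\<in>L. l <# C = C))" for C
    proof
      assume "(\<exists>h\<in>carrier G. C = h <# K) \<and> (\<forall>l\<in>L. l <# C = C)"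
      then obtain h where h: "h \<in> carrier G" "C = h <# K" "\<forall>l\<in>L. l <# C = C" by blast
      then show False using lcos_fix[OF assms(1) h(1)] P[OF h(1)] False assms(2) by blast
    qed
    then show ?thesis using False by auto
  qed
  then show ?thesis unfolding mark_def by simp
qed

context dihm begin

lemma dsnd: "snd (u \<otimes>\<^bsub>D\<^esub> v) = (snd u \<noteq> snd v)"
  by (cases u; cases v) (simp add: dmult)
lemma dsnd_inv: "h \<in> carrier D \<Longrightarrow> snd (inv\<^bsub>D\<^esub> h) = snd h"
  by (cases h; cases "snd h") (auto simp: dcarrier inv_rot inv_ref)

lemma conj_mu_iff: assumes "k dvd m" "l \<in> carrier D" "g \<in> carrier D"
  shows "g \<otimes>\<^bsub>D\<^esub> l \<otimes>\<^bsub>D\<^esub> inv\<^bsub>D\<^esub> g \<in> mu m k \<longleftrightarrow> l \<in> mu m k"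
proof
  assume "g \<otimes>\<^bsub>D\<^esub> l \<otimes>\<^bsub>D\<^esub> inv\<^bsub>D\<^esub> g \<in> mu m k"
  from conj_mu[OF assms(1) this DG.inv_closed[OF assms(3)]]
  show "l \<in> mu m k" using assms(2,3) by (simp add: DG.m_assoc)
qed (rule conj_mu[OF assms(1) _ assms(3)])

lemma finD: "finite (carrier D)" by (simp add: dcarrier)

lemma order_pos: "order D > 0"
  unfolding order_def using finD DG.one_closed by (auto simp: card_gt_0_iff)

lemma mu_set: "mu m k = {j. j < m \<and> (m div k) dvd j} \<times> {False}" by (auto simp: mu_def)
lemma dih_set: "dih m k = {j. j < m \<and> (m div k) dvd j} \<times> UNIV" by (auto simp: dih_def)

lemma card_mu_pos: "card (mu m k) > 0"
  unfolding mu_set using mpos by (subst card_gt_0_iff) auto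

lemma card_dih: "card (dih m k) = 2 * card (mu m k)"
  unfolding mu_set dih_set by (simp add: card_cartesian_product)

definition N where "N k = card (lcosets\<^bsub>D\<^esub> (dih m k))"

lemma ncos_mu: assumes k: "k dvd m" shows "card (lcosets\<^bsub>D\<^esub> (mu m k)) = 2 * N k"
proof -
  have "card (lcosets\<^bsub>D\<^esub> (mu m k)) * card (mu m k) = (2 * N k) * card (mu m k)"
    using DG.l_lagrange[OF finD mu_sub[OF k]] DG.l_lagrange[OF finD dih_sub[OF k]] card_dih
    unfolding N_def by (simp add: algebra_simps)
  then show ?thesis using card_mu_pos[of k] by simp
qed

lemma N_pos: assumes k: "k dvd m" shows "N k > 0"
proof (rule ccontr)
  assume "\<not> N k > 0"
  then have "N k = 0" by simp
  then show False using DG.l_lagrange[OF finD dih_sub[OF k]] order_pos unfolding N_def by simp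
qed

lemma dih_m: "dih m m = carrier D"
  using mpos by (auto simp: dih_def dcarrier)

lemma N_m: "N m = 1"
proof -
  have "card (carrier D) > 0" using order_pos order_def by metis
  then show ?thesis
  using DG.l_lagrange[OF finD dih_sub[of m]] unfolding N_def dih_m order_def by simp
qed

end

context dihm begin

lemma subgrpsD: "L \<in> subgrps D (carrier D) \<Longrightarrow> L \<subseteq> carrier D \<and> subgroup L D"
  by (simp add: subgrps_def)

lemma snd_conj: "g \<in> carrier D \<Longrightarrow> snd (g \<otimes>\<^bsub>D\<^esub> l \<otimes>\<^bsub>D\<^esub> inv\<^bsub>D\<^esub> g) = snd l"
  by (simp add: dsnd dsnd_inv) blast

lemma mu_m_iff: "l \<in> carrier D \<Longrightarrow> l \<in> mu m m \<longleftrightarrow> snd l = False"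
  using mpos by (auto simp: mem_mu dcarrier)

lemma mu_dih_iff: "snd y = False \<Longrightarrow> y \<in> dih m k \<longleftrightarrow> y \<in> mu m k"
  by (simp add: mem_mu mem_dih)

lemma invconj: "h \<in> carrier D \<Longrightarrow> inv\<^bsub>D\<^esub> h \<otimes>\<^bsub>D\<^esub> l \<otimes>\<^bsub>D\<^esub> h
   = inv\<^bsub>D\<^esub> h \<otimes>\<^bsub>D\<^esub> l \<otimes>\<^bsub>D\<^esub> inv\<^bsub>D\<^esub> (inv\<^bsub>D\<^esub> h)"
  by simp

lemma cls_G: "L \<in> subgrps D (carrier D) \<Longrightarrow> cls D (carrier D) (carrier D) L = 1"
  using DG.mark_formula[OF DG.subgroup_self, of L True] subgrpsD[of L] N_m
  unfolding cls_def N_def dih_m by auto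

lemma cls_rot:
  assumes L: "L \<in> subgrps D (carrier D)" "L \<subseteq> mu m m" and k: "k dvd m"
  shows "cls D (carrier D) (mu m k) L = (if L \<subseteq> mu m k then 2 * int (N k) else 0)"
    and "cls D (carrier D) (dih m k) L = (if L \<subseteq> mu m k then int (N k) else 0)"
proof -
  have Lc: "L \<subseteq> carrier D" using subgrpsD[OF L(1)] by blast
  have key: "inv\<^bsub>D\<^esub> h \<otimes>\<^bsub>D\<^esub> l \<otimes>\<^bsub>D\<^esub> h \<in> mu m k \<longleftrightarrow> l \<in> mu m k"
    if "h \<in> carrier D" "l \<in> L" for h l
    using conj_mu_iff[OF k _ DG.inv_closed[OF that(1)], of l] that Lc by auto
  have key2: "inv\<^bsub>D\<^esub> h \<otimes>\<^bsub>D\<^esub> l \<otimes>\<^bsub>D\<^esub> h \<in> dih m k \<longleftrightarrow> l \<in> mu m k"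
    if "h \<in> carrier D" "l \<in> L" for h l
  proof -
    have "snd l = False" using that L(2) mu_m_iff Lc by blast
    then have "snd (inv\<^bsub>D\<^esub> h \<otimes>\<^bsub>D\<^esub> l \<otimes>\<^bsub>D\<^esub> h) = False"
      using snd_conj[OF DG.inv_closed[OF that(1)], of l] that(1) by simp
    then show ?thesis using key[OF that] mu_dih_iff by blast
  qed
  have m1: "mark D (carrier D) (mu m k) L = (if L \<subseteq> mu m k then card (lcosets\<^bsub>D\<^esub> (mu m k)) else 0)"
    by (rule DG.mark_formula[OF mu_sub[OF k] Lc]) (use key in blast)
  have m2: "mark D (carrier D) (dih m k) L = (if L \<subseteq> mu m k then card (lcosets\<^bsub>D\<^esub> (dih m k)) else 0)"
    by (rule DG.mark_formula[OF dih_sub[OF k] Lc]) (use key2 in blast)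
  show "cls D (carrier D) (mu m k) L = (if L \<subseteq> mu m k then 2 * int (N k) else 0)"
    using m1 ncos_mu[OF k] L(1) unfolding cls_def by simp
  show "cls D (carrier D) (dih m k) L = (if L \<subseteq> mu m k then int (N k) else 0)"
    using m2 L(1) unfolding cls_def N_def by simp
qed

lemma cls_ref:
  assumes L: "L \<in> subgrps D (carrier D)" "\<not> L \<subseteq> mu m m" and k: "k dvd m"
  shows "cls D (carrier D) (mu m k) L = 0"
proof -
  have Lc: "L \<subseteq> carrier D" using subgrpsD[OF L(1)] by blast
  obtain l where l: "l \<in> L" "snd l = True" using L(2) Lc mu_m_iff by blast
  have "\<not> inv\<^bsub>D\<^esub> h \<otimes>\<^bsub>D\<^esub> l \<otimes>\<^bsub>D\<^esub> h \<in> mu m k" if "h \<in> carrier D" for h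
  proof -
    have "snd (inv\<^bsub>D\<^esub> h \<otimes>\<^bsub>D\<^esub> l \<otimes>\<^bsub>D\<^esub> h) = True"
      using snd_conj[OF DG.inv_closed[OF that(1)], of l] that(1) l by simp
    then show ?thesis by (simp add: mem_mu)
  qed
  then have "mark D (carrier D) (mu m k) L = (if False then card (lcosets\<^bsub>D\<^esub> (mu m k)) else 0)"
    by (intro DG.mark_formula[OF mu_sub[OF k] Lc]) (use l(1) in blast)
  then show ?thesis unfolding cls_def by simp
qed

end

context dihm begin

definition x0 where "x0 = (\<lambda>L. 2 * cls D (carrier D) (carrier D) L - cls D (carrier D) (mu m m) L)"
definition II where "II = {f. (carrier D, f) \<in> mackey_ideal D x0}"

lemma mu_subgrps: "d dvd m \<Longrightarrow> mu m d \<in> subgrps D (carrier D)"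
  using mu_sub subgroup.subset unfolding subgrps_def by blast
lemma dih_subgrps: "d dvd m \<Longrightarrow> dih m d \<in> subgrps D (carrier D)"
  using dih_sub subgroup.subset unfolding subgrps_def by blast
lemma mu_mu_m: "mu m d \<subseteq> mu m m"
  using mpos by (auto simp: mem_mu)

lemma x0_mu: "d dvd m \<Longrightarrow> x0 (mu m d) = 0"
  unfolding x0_def using cls_G[OF mu_subgrps] cls_rot(1)[OF mu_subgrps[of d] mu_mu_m[of d], of m] N_m mu_mu_m[of d] by simp

lemma inv_mu: "(H, f) \<in> mackey_ideal D x0 \<Longrightarrow> d dvd m \<Longrightarrow> f (mu m d) = 0"
proof (induction arbitrary: d rule: mackey_ideal.induct)
  case base
  then show ?case using x0_mu by simp
next
  case (transf K f H)
  have "\<And>h. h \<in> H \<Longrightarrow> h \<in> carrier D" using transf.hyps(3) unfolding subgrps_def by blast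
  then have "\<And>h. h \<in> H \<Longrightarrow> f (conjset D (inv\<^bsub>D\<^esub> h) (mu m d)) = 0"
    using conjset_mu[OF transf.prems] transf.IH[OF transf.prems] by simp
  then show ?case unfolding tr_def by simp
next
  case (conjg H f g)
  then show ?case unfolding conjB_def using conjset_mu[OF conjg.prems] by simp
qed (auto simp: res_def)

lemma II_zero: "(\<lambda>L. 0) \<in> II"
proof -
  have "(carrier D, \<lambda>L. x0 L + - x0 L) \<in> mackey_ideal D x0"
    by (intro mackey_ideal.add mackey_ideal.neg mackey_ideal.base)
  then show ?thesis unfolding II_def by simp
qed

lemma II_add: "f \<in> II \<Longrightarrow> g \<in> II \<Longrightarrow> (\<lambda>L. f L + g L) \<in> II"
  unfolding II_def by (simp add: mackey_ideal.add)
lemma II_neg: "f \<in> II \<Longrightarrow> (\<lambda>L. - f L) \<in> II"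
  unfolding II_def by (simp add: mackey_ideal.neg)

lemma II_nat: "f \<in> II \<Longrightarrow> (\<lambda>L. int n * f L) \<in> II"
proof (induction n)
  case 0 then show ?case using II_zero by simp
next
  case (Suc n)
  from II_add[OF Suc.IH[OF Suc.prems] Suc.prems] show ?case by (simp add: algebra_simps)
qed

lemma II_smult: assumes f: "f \<in> II" shows "(\<lambda>L. c * f L) \<in> II"
proof (cases "c \<ge> 0")
  case True
  then obtain n where "c = int n" using nonneg_int_cases by blast
  then show ?thesis using II_nat f by simp
next
  case False
  then have "c = - int (nat (- c))" by simp
  then obtain n where "c = - int n" by blast
  then show ?thesis using II_neg[OF II_nat[OF f, of n]] by simp
qed

lemma fin_subgrps: "finite (subgrps D (carrier D))"
  by (rule finite_subset[of _ "Pow (carrier D)"]) (auto simp: subgrps_def finD)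

lemma cls_burnside: "K \<in> subgrps D (carrier D) \<Longrightarrow> cls D (carrier D) K \<in> burnside D (carrier D)"
proof -
  assume K: "K \<in> subgrps D (carrier D)"
  have h: "cls D (carrier D) K L = (\<Sum>K'\<in>subgrps D (carrier D). (if K' = K then 1 else 0) * cls D (carrier D) K' L)" for L
  proof -
    have eq: "(\<lambda>K'. (if K' = K then 1 else 0) * cls D (carrier D) K' L) = (\<lambda>K'. if K = K' then cls D (carrier D) K L else 0)"
      by auto
    show ?thesis by (simp only: eq) (simp add: K fin_subgrps)
  qed
  show ?thesis unfolding burnside_def
    by (rule CollectI, rule exI[of _ "\<lambda>K'. if K' = K then 1 else 0"], rule ext, rule h)
qed

lemma cls_out: "L \<notin> subgrps D (carrier D) \<Longrightarrow> cls D (carrier D) K L = 0"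
  by (simp add: cls_def)

lemma part2: assumes k: "k dvd m"
  shows "(\<lambda>L. cls D (carrier D) (mu m k) L - 2 * cls D (carrier D) (dih m k) L) \<in> II"
proof -
  have "(carrier D, \<lambda>L. - (cls D (carrier D) (dih m k) L * x0 L)) \<in> mackey_ideal D x0"
    by (intro mackey_ideal.neg mackey_ideal.mult[OF mackey_ideal.base] cls_burnside dih_subgrps k)
  moreover have "(\<lambda>L. - (cls D (carrier D) (dih m k) L * x0 L)) =
     (\<lambda>L. cls D (carrier D) (mu m k) L - 2 * cls D (carrier D) (dih m k) L)"
  proof
    fix L
    consider "L \<notin> subgrps D (carrier D)" | "L \<in> subgrps D (carrier D)" "L \<subseteq> mu m m"
      | "L \<in> subgrps D (carrier D)" "\<not> L \<subseteq> mu m m" by blast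
    then show "- (cls D (carrier D) (dih m k) L * x0 L) = cls D (carrier D) (mu m k) L - 2 * cls D (carrier D) (dih m k) L"
    proof cases
      case 1 then show ?thesis by (simp add: cls_out)
    next
      case 2 then show ?thesis unfolding x0_def
        using cls_G[OF 2(1)] cls_rot[OF 2 k] cls_rot(1)[OF 2 dvd_refl] N_m by simp
    next
      case 3 then show ?thesis unfolding x0_def
        using cls_G[OF 3(1)] cls_ref[OF 3 k] cls_ref[OF 3 dvd_refl] by simp
    qed
  qed
  ultimately show ?thesis unfolding II_def by simp
qed

lemma II_sum: "finite S \<Longrightarrow> (\<And>K. K \<in> S \<Longrightarrow> g K \<in> II) \<Longrightarrow> (\<lambda>L. \<Sum>K\<in>S. c K * g K L) \<in> II"
proof (induction S rule: finite_induct)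
  case empty then show ?case using II_zero by simp
next
  case (insert K S)
  have a: "g K \<in> II" using insert.prems by simp
  have b: "(\<lambda>L. \<Sum>K\<in>S. c K * g K L) \<in> II" by (rule insert.IH) (use insert.prems in simp)
  have "(\<lambda>L. c K * g K L + (\<Sum>K\<in>S. c K * g K L)) \<in> II"
    by (rule II_add[OF II_smult[OF a] b])
  then show ?case using insert by simp
qed

lemma mu_sub_le: assumes "d dvd m" "k dvd m" "mu m d \<subseteq> mu m k" shows "d \<le> k"
proof (cases "d = 1")
  case True
  then show ?thesis using assms(2) mpos using dvd_pos_nat[OF mpos assms(2)] by simp
next
  case False
  have d0: "d > 0" using dvd_pos_nat[OF mpos assms(1)] .
  have "m div d < m" using False d0 mpos by (simp add: div_less_dividend)
  then have "(m div d, False) \<in> mu m d" by (simp add: mem_mu)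
  then have "(m div d, False) \<in> mu m k" using assms(3) by blast
  then have "(m div k) dvd (m div d)" by (simp add: mem_mu)
  moreover have "m div d > 0" using dvd_imp_le[OF assms(1) mpos] d0 by (simp add: div_greater_zero_iff)
  ultimately have le: "m div k \<le> m div d" by (simp add: dvd_imp_le)
  have e1: "d * (m div d) = m" "k * (m div k) = m" using assms(1,2) by simp_all
  show ?thesis
  proof (rule ccontr)
    assume "\<not> d \<le> k"
    then have "k * (m div d) < d * (m div d)" using \<open>m div d > 0\<close> by simp
    moreover have "k * (m div k) \<le> k * (m div d)" using le by simp
    ultimately show False using e1 by linarith
  qed
qed

lemma finDiv: "finite {k. k dvd m}" using mpos by simp

lemma tri:
  assumes "\<And>d. d dvd m \<Longrightarrow> (\<Sum>k\<in>{k. k dvd m}. e k * cls D (carrier D) (dih m k) (mu m d)) = 0"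
  shows "k dvd m \<Longrightarrow> e k = 0"
proof (rule ccontr)
  assume "k dvd m" "e k \<noteq> 0"
  define S where "S = {k. k dvd m \<and> e k \<noteq> 0}"
  have fS: "finite S" unfolding S_def using finDiv by (rule rev_finite_subset) auto
  have "k \<in> S" using \<open>k dvd m\<close> \<open>e k \<noteq> 0\<close> by (simp add: S_def)
  define d where "d = Max S"
  have dS: "d \<in> S" unfolding d_def using fS \<open>k \<in> S\<close> by (auto intro: Max_in)
  then have dm: "d dvd m" and ed: "e d \<noteq> 0" by (auto simp: S_def)
  have val: "cls D (carrier D) (dih m k') (mu m d) = (if mu m d \<subseteq> mu m k' then int (N k') else 0)" if "k' dvd m" for k'
    using cls_rot(2)[OF mu_subgrps[OF dm] mu_mu_m that] .
  have zero: "e k' * cls D (carrier D) (dih m k') (mu m d) = 0" if "k' \<in> {k. k dvd m} - {d}" for k'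
  proof (cases "e k' = 0")
    case False
    then have "k' \<in> S" using that by (simp add: S_def)
    then have "k' \<le> d" unfolding d_def using fS by simp
    then have "k' < d" using that by simp
    then have "\<not> mu m d \<subseteq> mu m k'" using mu_sub_le[OF dm, of k'] that by auto
    then show ?thesis using val that by simp
  qed simp
  have s0: "(\<Sum>k\<in>{k. k dvd m}. e k * cls D (carrier D) (dih m k) (mu m d)) = 0" using assms dm by simp
  have s1: "(\<Sum>k\<in>{k. k dvd m}. e k * cls D (carrier D) (dih m k) (mu m d)) = e d * cls D (carrier D) (dih m d) (mu m d) + (\<Sum>k\<in>{k. k dvd m} - {d}. e k * cls D (carrier D) (dih m k) (mu m d))"
    using finDiv dm by (subst sum.remove) auto
  have s2: "(\<Sum>k\<in>{k. k dvd m} - {d}. e k * cls D (carrier D) (dih m k) (mu m d)) = 0"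
    by (rule sum.neutral) (use zero in blast)
  have "e d * cls D (carrier D) (dih m d) (mu m d) = 0" using s0 s1 s2 by linarith
  then have "e d * int (N d) = 0" using val[OF dm] by simp
  then   show False using ed N_pos[OF dm] by simp
qed

end


lemma int_subgroup:
  fixes R :: "int set" and m :: nat
  assumes add: "\<And>a b. a \<in> R \<Longrightarrow> b \<in> R \<Longrightarrow> a + b \<in> R"
    and neg: "\<And>a. a \<in> R \<Longrightarrow> - a \<in> R"
    and mR: "int m \<in> R" and mpos: "m > 0"
  shows "\<exists>q::nat. q > 0 \<and> q dvd m \<and> (\<forall>z. z \<in> R \<longleftrightarrow> int q dvd z)"
proof -
  have zero: "0 \<in> R" using add[OF mR neg[OF mR]] by simp
  have multn: "int n * z \<in> R" if "z \<in> R" for n z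
  proof (induction n)
    case 0 then show ?case using zero by simp
  next
    case (Suc n) then show ?case using add[OF Suc that] by (simp add: algebra_simps)
  qed
  have mult: "t * z \<in> R" if "z \<in> R" for t z
  proof (cases "t \<ge> 0")
    case True then obtain n where "t = int n" using nonneg_int_cases by blast
    then show ?thesis using multn[OF that] by simp
  next
    case False then have "t = - int (nat (- t))" by simp
    then obtain n where "t = - int n" by blast
    then show ?thesis using neg[OF multn[OF that, of n]] by simp
  qed
  define q where "q = (LEAST n::nat. n > 0 \<and> int n \<in> R)"
  have qR: "q > 0 \<and> int q \<in> R" unfolding q_def by (rule LeastI[of _ m]) (use mR mpos in simp)
  have qmin: "n > 0 \<Longrightarrow> int n \<in> R \<Longrightarrow> q \<le> n" for n unfolding q_def by (rule Least_le) simp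
  have dv: "int q dvd z" if "z \<in> R" for z
  proof (rule ccontr)
    assume nd: "\<not> int q dvd z"
    have "z mod int q = z + (- (z div int q)) * int q" by (simp add: algebra_simps minus_div_mult_eq_mod[symmetric])
    moreover have "z + (- (z div int q)) * int q \<in> R" using add[OF that mult[OF conjunct2[OF qR], of "- (z div int q)"]] .
    ultimately have "z mod int q \<in> R" by simp
    moreover have "z mod int q > 0" using nd qR by (simp add: dvd_eq_mod_eq_0 order_le_neq_trans)
    moreover have "z mod int q < int q" using qR by simp
    ultimately show False using qmin[of "nat (z mod int q)"] by simp
  qed
  have bk: "z \<in> R" if dq: "int q dvd z" for z
  proof -
    obtain t where "z = int q * t" using dq by (rule dvdE)
    then have "z = t * int q" by simp
    then show ?thesis using mult[OF conjunct2[OF qR], of t] by simp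
  qed
  have qm: "q dvd m" using dv[OF mR] by simp
  show ?thesis
  proof (intro exI[of _ q] conjI allI iffI)
    show "q > 0" using qR by simp
    show "q dvd m" by (rule qm)
  qed (use dv bk in auto)
qed


context dihm begin

lemma nat_mod_eq: "int (nat (z mod int m)) = z mod int m" using mpos by simp

lemma rot_class:
  assumes K: "subgroup K D"
  shows "\<exists>q::nat. q > 0 \<and> q dvd m \<and> (\<forall>j. (j, False) \<in> K \<longleftrightarrow> j < m \<and> q dvd j)"
proof -
  define R where "R = {z::int. (nat (z mod int m), False) \<in> K}"
  have addR: "a + b \<in> R" if "a \<in> R" "b \<in> R" for a b
  proof -
    have "(nat (a mod int m), False) \<otimes>\<^bsub>D\<^esub> (nat (b mod int m), False) \<in> K"
      using that subgroup.m_closed[OF K] unfolding R_def by blast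
    moreover have "(nat (a mod int m) + nat (b mod int m)) mod m = nat ((a + b) mod int m)"
      by (rule int_int_eq[THEN iffD1]) (simp only: md2 nat_mod_eq, simp add: mod_add_eq)
    ultimately show ?thesis unfolding R_def by (simp add: dmult)
  qed
  have negR: "- a \<in> R" if "a \<in> R" for a
  proof -
    have "inv\<^bsub>D\<^esub> (nat (a mod int m), False) \<in> K"
      using that subgroup.m_inv_closed[OF K] unfolding R_def by blast
    moreover have "nat (a mod int m) < m" using mpos by (simp add: nat_less_iff)
    moreover have "(m - nat (a mod int m)) mod m = nat ((- a) mod int m)" if "nat (a mod int m) < m"
      by (rule int_int_eq[THEN iffD1]) (simp only: md3[OF that] nat_mod_eq, simp add: mod_minus_eq)
    ultimately show ?thesis unfolding R_def by (simp add: inv_rot)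
  qed
  have mR: "int m \<in> R" unfolding R_def using subgroup.one_closed[OF K] by (simp add: dmone)
  obtain q where q: "q > 0" "q dvd m" "\<forall>z. z \<in> R \<longleftrightarrow> int q dvd z"
    using int_subgroup[OF addR negR mR mpos] by blast
  have jj: "(j, False) \<in> K \<longleftrightarrow> j < m \<and> q dvd j" for j
  proof (cases "j < m")
    case True
    have "int j mod int m = int j" using True by simp
    then have "nat (int j mod int m) = j" by simp
    then have "(j, False) \<in> K \<longleftrightarrow> int j \<in> R" unfolding R_def by simp
    then show ?thesis using q(3) True by simp
  next
    case False
    then have "(j, False) \<notin> K" using subgroup.subset[OF K] by (auto simp: dcarrier)
    then show ?thesis using False by simp
  qed
  show ?thesis using q(1,2) jj by (intro exI[of _ q]) simp
qed

end

context dihm begin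

lemma two_s: "int m dvd (2 * ((int r * (int m + 1) div 2) mod int m) - int r)"
proof -
  have ev: "even (int r * (int m + 1))" using odd by simp
  have "2 * ((int r * (int m + 1) div 2) mod int m) mod int m = (2 * (int r * (int m + 1) div 2)) mod int m"
    by (simp add: mod_mult_right_eq)
  also have "2 * (int r * (int m + 1) div 2) = int r * (int m + 1)" using ev by simp
  also have "(int r * (int m + 1)) mod int m = int r mod int m" by (simp add: algebra_simps)
  finally show ?thesis by (simp add: mod_eq_dvd_iff)
qed

lemma dvd_mod_iff: "int q dvd int m \<Longrightarrow> (int q dvd (x mod int m - y)) \<longleftrightarrow> int q dvd (x - y)"
proof -
  assume qm: "int q dvd int m"
  have "x mod int m - y = (x - y) + (- (x div int m)) * int m"
    by (simp add: algebra_simps minus_div_mult_eq_mod[symmetric])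
  moreover have "int q dvd (- (x div int m)) * int m" using qm by simp
  ultimately show ?thesis by (metis dvd_add_left_iff)
qed

lemma conj_ref: assumes "j < m" "s < m"
  shows "(s, False) \<otimes>\<^bsub>D\<^esub> (j, True) \<otimes>\<^bsub>D\<^esub> inv\<^bsub>D\<^esub> (s, False) = (nat ((2 * int s + int j) mod int m), True)"
  using assms
  apply (simp add: inv_rot dmult)
  apply (rule int_int_eq[THEN iffD1])
  apply (simp only: md1 md2 md3 nat_mod_eq mod_less_divisor[OF mpos])
  apply (simp add: mod_simps)
  done


lemma div_q: assumes "q > 0" "q dvd m" shows "(m div q) dvd m" "m div (m div q) = q"
proof -
  obtain t where t: "m = q * t" using assms(2) by (rule dvdE)
  then have "t > 0" using mpos by (cases t) auto
  then show "(m div q) dvd m" "m div (m div q) = q" using t assms(1) by simp_all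
qed

lemma classA:
  assumes K: "subgroup K D" "K \<subseteq> mu m m"
  shows "\<exists>d. d dvd m \<and> K = mu m d"
proof -
  obtain q where q: "q > 0" "q dvd m" "\<forall>j. (j, False) \<in> K \<longleftrightarrow> j < m \<and> q dvd j"
    using rot_class[OF K(1)] by blast
  have "K = mu m (m div q)"
  proof
    show "K \<subseteq> mu m (m div q)"
    proof
      fix x assume x: "x \<in> K"
      then have "snd x = False" using K(2) by (auto simp: mem_mu)
      then show "x \<in> mu m (m div q)" using x q(3) div_q[OF q(1,2)] by (cases x) (auto simp: mem_mu)
    qed
    show "mu m (m div q) \<subseteq> K" using q(3) div_q[OF q(1,2)] by (auto simp: mu_def)
  qed
  then show ?thesis using div_q[OF q(1,2)] by (intro exI[of _ "m div q"]) simp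
qed

lemma classB:
  assumes K: "subgroup K D" and r: "(r, True) \<in> K"
  shows "\<exists>d g. d dvd m \<and> g \<in> carrier D \<and> K = conjset D g (dih m d)"
proof -
  obtain q where q: "q > 0" "q dvd m" "\<forall>j. (j, False) \<in> K \<longleftrightarrow> j < m \<and> q dvd j"
    using rot_class[OF K(1)] by blast
  have qm: "int q dvd int m" using q(2) by simp
  have rc: "(r, True) \<in> carrier D" using r subgroup.subset[OF K] by blast
  then have rm: "r < m" by (simp add: dcarrier)
  have refl: "(j, True) \<in> K \<longleftrightarrow> j < m \<and> int q dvd (int j - int r)" for j
  proof (cases "j < m")
    case True
    have jc: "(j, True) \<in> carrier D" using True by (simp add: dcarrier)
    have p: "(j, True) \<otimes>\<^bsub>D\<^esub> (r, True) = ((j + m - r) mod m, False)" by (simp add: dmult)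
    have "(j, True) \<in> K \<longleftrightarrow> (j, True) \<otimes>\<^bsub>D\<^esub> (r, True) \<in> K"
    proof
      assume "(j, True) \<in> K" then show "(j, True) \<otimes>\<^bsub>D\<^esub> (r, True) \<in> K"
        using subgroup.m_closed[OF K _ r] by blast
    next
      assume a: "(j, True) \<otimes>\<^bsub>D\<^esub> (r, True) \<in> K"
      have "(j, True) = ((j, True) \<otimes>\<^bsub>D\<^esub> (r, True)) \<otimes>\<^bsub>D\<^esub> inv\<^bsub>D\<^esub> (r, True)"
        using jc rc by (simp add: DG.m_assoc)
      then show "(j, True) \<in> K"
        using subgroup.m_closed[OF K a subgroup.m_inv_closed[OF K r]] by simp
    qed
    also have "\<dots> \<longleftrightarrow> q dvd (j + m - r) mod m" using p q(3) mpos by simp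
    also have "\<dots> \<longleftrightarrow> int q dvd ((int j - int r) mod int m)" using md1[OF rm, of j]
      by (metis int_dvd_int_iff)
    also have "\<dots> \<longleftrightarrow> int q dvd (int j - int r)" using dvd_mod_iff[OF qm, of "int j - int r" 0] by simp
    finally show ?thesis using True by simp
  next
    case False
    then have "(j, True) \<notin> K" using subgroup.subset[OF K] by (auto simp: dcarrier)
    then show ?thesis using False by simp
  qed
  define s where "s = nat ((int r * (int m + 1) div 2) mod int m)"
  have sm: "s < m" unfolding s_def using mpos by (simp add: nat_less_iff)
  have si: "int s = (int r * (int m + 1) div 2) mod int m" unfolding s_def using mpos by simp
  have s2: "int q dvd (2 * int s - int r)"
    unfolding si by (rule dvd_trans[OF qm two_s[of r]])
  define d where "d = m div q"
  have dm: "d dvd m" "m div d = q" unfolding d_def using div_q[OF q(1,2)] by auto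
  have gc: "(s, False) \<in> carrier D" using sm by (simp add: dcarrier)
  have "K = conjset D (s, False) (dih m d)"
  proof
    show "conjset D (s, False) (dih m d) \<subseteq> K"
    proof
      fix y assume "y \<in> conjset D (s, False) (dih m d)"
      then obtain x where x: "x \<in> dih m d" "y = (s, False) \<otimes>\<^bsub>D\<^esub> x \<otimes>\<^bsub>D\<^esub> inv\<^bsub>D\<^esub> (s, False)"
        unfolding conjset_def by blast
      obtain j e where je: "x = (j, e)" "j < m" "q dvd j" using x(1) dm by (cases x) (auto simp: mem_dih)
      show "y \<in> K"
      proof (cases e)
        case False
        then show ?thesis using x(2) je conj_rot[OF je(2) gc] q(3) by simp
      next
        case True
        have "int q dvd (2 * int s - int r + int j)" using dvd_add[OF s2, of "int j"] je(3) by simp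
        then have "int q dvd ((2 * int s + int j) mod int m - int r)"
          using dvd_mod_iff[OF qm, of "2 * int s + int j" "int r"] by (simp add: algebra_simps)
        then show ?thesis using x(2) je True conj_ref[OF je(2) sm] refl mpos
          by (simp add: nat_less_iff)
      qed
    qed
    show "K \<subseteq> conjset D (s, False) (dih m d)"
    proof
      fix y assume y: "y \<in> K"
      obtain j e where je: "y = (j, e)" by (cases y)
      have jm: "j < m" using y je subgroup.subset[OF K] by (auto simp: dcarrier)
      show "y \<in> conjset D (s, False) (dih m d)"
      proof (cases e)
        case False
        then have "q dvd j" using y je q(3) by simp
        then have "(j, False) \<in> dih m d" using jm dm by (simp add: mem_dih)
        moreover have "y = (s, False) \<otimes>\<^bsub>D\<^esub> (j, False) \<otimes>\<^bsub>D\<^esub> inv\<^bsub>D\<^esub> (s, False)"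
          using conj_rot[OF jm gc] je False by simp
        ultimately show ?thesis unfolding conjset_def by (rule image_eqI[rotated])
      next
        case True
        then have qj: "int q dvd (int j - int r)" using y je refl by simp
        define j' where "j' = nat ((int j - 2 * int s) mod int m)"
        have j'm: "j' < m" unfolding j'_def using mpos by (simp add: nat_less_iff)
        have ij': "int j' = (int j - 2 * int s) mod int m" unfolding j'_def by (rule nat_mod_eq)
        have "int q dvd (int j - int r - (2 * int s - int r))" by (rule dvd_diff[OF qj s2])
        then have "int q dvd (int j - 2 * int s)" by simp
        then have "int q dvd int j'" using dvd_mod_iff[OF qm, of "int j - 2 * int s" 0] ij' by simp
        then have "(j', True) \<in> dih m d" using j'm dm by (simp add: mem_dih)
        moreover have "(2 * int s + int j') mod int m = int j"
          unfolding ij' using mpos jm by (simp add: mod_simps)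
        then have "nat ((2 * int s + int j') mod int m) = j" by simp
        then have "y = (s, False) \<otimes>\<^bsub>D\<^esub> (j', True) \<otimes>\<^bsub>D\<^esub> inv\<^bsub>D\<^esub> (s, False)"
          using conj_ref[OF j'm sm] je True by simp
        ultimately show ?thesis unfolding conjset_def by (rule image_eqI[rotated])
      qed
    qed
  qed
  then show ?thesis using dm gc by (intro exI[of _ d] exI[of _ "(s, False)"]) simp
qed

end


lemma (in group) mark_conj:
  assumes K: "K \<subseteq> carrier G" and g: "g \<in> carrier G" and L: "L \<subseteq> carrier G"
  shows "mark G (carrier G) (conjset G g K) L = mark G (carrier G) K L"
proof -
  define A where "A = {C. (\<exists>h\<in>carrier G. C = h <# K) \<and> (\<forall>l\<in>L. l <# C = C)}"
  define B where "B = {C. (\<exists>h\<in>carrier G. C = h <# conjset G g K) \<and> (\<forall>l\<in>L. l <# C = C)}"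
  define \<phi> where "\<phi> = (\<lambda>C. C #> inv g)"
  have F1: "h <# conjset G g K = \<phi> ((h \<otimes> g) <# K)" if "h \<in> carrier G" for h
    unfolding \<phi>_def l_coset_def r_coset_def conjset_def using that g K
    by (auto simp: m_assoc subsetD)
  have F2: "l <# \<phi> C = \<phi> (l <# C)" if "l \<in> carrier G" "C \<subseteq> carrier G" for l C
    unfolding \<phi>_def l_coset_def r_coset_def using that g
    by (auto simp: m_assoc subsetD)
  have F3: "\<phi> C #> g = C" if "C \<subseteq> carrier G" for C
    unfolding \<phi>_def using that g by (simp add: coset_mult_assoc coset_mult_one)
  have inj: "C1 = C2" if "\<phi> C1 = \<phi> C2" "C1 \<subseteq> carrier G" "C2 \<subseteq> carrier G" for C1 C2
    using F3[OF that(2)] F3[OF that(3)] that(1) by metis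
  have cs: "h <# K \<subseteq> carrier G" if "h \<in> carrier G" for h using l_coset_subset_G[OF K that] .
  have ls: "l <# C \<subseteq> carrier G" if "l \<in> carrier G" "C \<subseteq> carrier G" for l C
    using l_coset_subset_G[OF that(2,1)] .
  have "B = \<phi> ` A"
  proof
    show "B \<subseteq> \<phi> ` A"
    proof
      fix C' assume "C' \<in> B"
      then obtain h where h: "h \<in> carrier G" "C' = h <# conjset G g K" and fx: "\<forall>l\<in>L. l <# C' = C'"
        unfolding B_def by blast
      define C where "C = (h \<otimes> g) <# K"
      have hg: "h \<otimes> g \<in> carrier G" using h g by simp
      have Cc: "C \<subseteq> carrier G" unfolding C_def using cs[OF hg] .
      have C': "C' = \<phi> C" unfolding C_def using F1[OF h(1)] h(2) by simp
      have "l <# C = C" if "l \<in> L" for l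
      proof -
        have lc: "l \<in> carrier G" using that L by blast
        have "\<phi> (l <# C) = \<phi> C" using F2[OF lc Cc] fx that C' by simp
        then show ?thesis using inj ls[OF lc Cc] Cc by blast
      qed
      then have "C \<in> A" unfolding A_def C_def using hg by blast
      then show "C' \<in> \<phi> ` A" using C' by blast
    qed
    show "\<phi> ` A \<subseteq> B"
    proof
      fix C' assume "C' \<in> \<phi> ` A"
      then obtain C where C': "C' = \<phi> C" and CA: "C \<in> A" by blast
      then obtain h where h: "h \<in> carrier G" "C = h <# K" and fx: "\<forall>l\<in>L. l <# C = C"
        unfolding A_def by blast
      have hg: "h \<otimes> inv g \<in> carrier G" using h g by simp
      have "h \<otimes> inv g \<otimes> g = h" using h g by (simp add: m_assoc)
      then have e: "C' = (h \<otimes> inv g) <# conjset G g K" using F1[OF hg] C' h(2) by simp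
      have Cc: "C \<subseteq> carrier G" using h cs by simp
      have "l <# C' = C'" if "l \<in> L" for l
        using F2[of l C] that L Cc fx C' by auto
      then show "C' \<in> B" unfolding B_def using e hg by blast
    qed
  qed
  moreover have "inj_on \<phi> A"
  proof (rule inj_onI)
    have Ac: "C \<subseteq> carrier G" if "C \<in> A" for C using that cs unfolding A_def by blast
    fix C1 C2 assume "C1 \<in> A" "C2 \<in> A" "\<phi> C1 = \<phi> C2"
    then show "C1 = C2" using inj Ac by blast
  qed
  ultimately have "card B = card A" by (simp add: card_image)
  then show ?thesis unfolding mark_def A_def B_def by simp
qed


lemma sum_delta_div: "(m::nat) > 0 \<Longrightarrow> d dvd m \<Longrightarrow> (\<Sum>k\<in>{k. k dvd m}. (if k = d then cc else 0) * XX k) = cc * (XX d :: int)"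
proof -
  assume d: "d dvd m" and m: "m > 0"
  have eq: "(\<lambda>k. (if k = d then cc else 0) * XX k) = (\<lambda>k. if d = k then cc * XX d else 0)" by auto
  have fin: "finite {k. k dvd m}" using m by simp
  show ?thesis by (simp only: eq) (simp add: fin d)
qed

context dihm begin

lemma cls_conj: assumes "K \<subseteq> carrier D" "g \<in> carrier D"
  shows "cls D (carrier D) (conjset D g K) = cls D (carrier D) K"
proof
  fix L show "cls D (carrier D) (conjset D g K) L = cls D (carrier D) K L"
  proof (cases "L \<in> subgrps D (carrier D)")
    case True
    then have Lc: "L \<subseteq> carrier D" by (simp add: subgrps_def)
    show ?thesis using DG.mark_conj[OF assms Lc] True by (simp add: cls_def)
  qed (simp add: cls_def)
qed

lemma perK: assumes K: "K \<in> subgrps D (carrier D)"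
  shows "\<exists>e. (\<forall>k. \<not> k dvd m \<longrightarrow> e k = 0) \<and>
     (\<lambda>L. cls D (carrier D) K L - (\<Sum>k\<in>{k. k dvd m}. e k * cls D (carrier D) (dih m k) L)) \<in> II"
proof -
  have Ks: "subgroup K D" "K \<subseteq> carrier D" using K by (auto simp: subgrps_def)
  show ?thesis
  proof (cases "K \<subseteq> mu m m")
    case True
    obtain d where d: "d dvd m" "K = mu m d" using classA[OF Ks(1) True] by blast
    have "(\<lambda>L. cls D (carrier D) K L - (\<Sum>k\<in>{k. k dvd m}. (if k = d then 2 else 0) * cls D (carrier D) (dih m k) L))
        = (\<lambda>L. cls D (carrier D) (mu m d) L - 2 * cls D (carrier D) (dih m d) L)"
      using d by (simp add: sum_delta_div[OF mpos])
    then show ?thesis using part2[OF d(1)] d(1)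
      by (intro exI[of _ "\<lambda>k. if k = d then 2 else 0"]) auto
  next
    case False
    then obtain x where x: "x \<in> K" "x \<notin> mu m m" by blast
    then have "snd x = True" using mu_m_iff Ks(2) by blast
    then obtain r where r: "(r, True) \<in> K" using x(1) by (cases x) auto
    obtain d g where dg: "d dvd m" "g \<in> carrier D" "K = conjset D g (dih m d)"
      using classB[OF Ks(1) r] by blast
    have dc: "dih m d \<subseteq> carrier D" using dih_sub[OF dg(1)] subgroup.subset by blast
    have "(\<lambda>L. cls D (carrier D) K L - (\<Sum>k\<in>{k. k dvd m}. (if k = d then 1 else 0) * cls D (carrier D) (dih m k) L))
        = (\<lambda>L. 0)"
      using dg cls_conj[OF dc dg(2)] by (simp add: sum_delta_div[OF mpos])
    then show ?thesis using II_zero dg(1)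
      by (intro exI[of _ "\<lambda>k. if k = d then 1 else 0"]) auto
  qed
qed

lemma main:
  "(\<forall>a \<in> burnside D (carrier D). \<exists>!c :: nat \<Rightarrow> int. (\<forall>k. \<not> k dvd m \<longrightarrow> c k = 0) \<and>
            (\<lambda>L. a L - (\<Sum>k\<in>{k. k dvd m}. c k * cls D (carrier D) (dih m k) L)) \<in> II)
       \<and> (\<forall>k. k dvd m \<longrightarrow> (\<lambda>L. cls D (carrier D) (mu m k) L - 2 * cls D (carrier D) (dih m k) L) \<in> II)"
proof (intro conjI ballI allI impI)
  fix k assume "k dvd m" then show "(\<lambda>L. cls D (carrier D) (mu m k) L - 2 * cls D (carrier D) (dih m k) L) \<in> II"
    by (rule part2)
next
  fix a assume "a \<in> burnside D (carrier D)"
  then obtain cK where a: "a = (\<lambda>L. \<Sum>K\<in>subgrps D (carrier D). cK K * cls D (carrier D) K L)"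
    unfolding burnside_def by blast
  let ?S = "subgrps D (carrier D)"
  let ?P = "\<lambda>c :: nat \<Rightarrow> int. (\<forall>k. \<not> k dvd m \<longrightarrow> c k = 0) \<and>
            (\<lambda>L. a L - (\<Sum>k\<in>{k. k dvd m}. c k * cls D (carrier D) (dih m k) L)) \<in> II"
  show "\<exists>!c. ?P c"
  proof (rule ex_ex1I)
    have "\<forall>K\<in>?S. \<exists>e. (\<forall>k. \<not> k dvd m \<longrightarrow> e k = 0) \<and>
     (\<lambda>L. cls D (carrier D) K L - (\<Sum>k\<in>{k. k dvd m}. e k * cls D (carrier D) (dih m k) L)) \<in> II"
      using perK by blast
    then obtain E where E0: "\<forall>K\<in>?S. (\<forall>k. \<not> k dvd m \<longrightarrow> E K k = 0) \<and>
     (\<lambda>L. cls D (carrier D) K L - (\<Sum>k\<in>{k. k dvd m}. E K k * cls D (carrier D) (dih m k) L)) \<in> II"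
      by (rule bchoice[THEN exE])
    have E: "(\<forall>k. \<not> k dvd m \<longrightarrow> E K k = 0) \<and>
     (\<lambda>L. cls D (carrier D) K L - (\<Sum>k\<in>{k. k dvd m}. E K k * cls D (carrier D) (dih m k) L)) \<in> II"
      if "K \<in> ?S" for K using E0 that by (rule bspec)
    define c where "c k = (\<Sum>K\<in>?S. cK K * E K k)" for k
    have c0: "\<forall>k. \<not> k dvd m \<longrightarrow> c k = 0" unfolding c_def using E by simp
    have eq: "(\<lambda>L. a L - (\<Sum>k\<in>{k. k dvd m}. c k * cls D (carrier D) (dih m k) L)) =
      (\<lambda>L. \<Sum>K\<in>?S. cK K * (cls D (carrier D) K L - (\<Sum>k\<in>{k. k dvd m}. E K k * cls D (carrier D) (dih m k) L)))"
    proof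
      fix L
      have "(\<Sum>k\<in>{k. k dvd m}. c k * cls D (carrier D) (dih m k) L)
          = (\<Sum>k\<in>{k. k dvd m}. \<Sum>K\<in>?S. cK K * (E K k * cls D (carrier D) (dih m k) L))"
        unfolding c_def by (simp add: sum_distrib_right mult.assoc)
      also have "\<dots> = (\<Sum>K\<in>?S. cK K * (\<Sum>k\<in>{k. k dvd m}. E K k * cls D (carrier D) (dih m k) L))"
        by (subst sum.swap) (simp add: sum_distrib_left)
      finally show "a L - (\<Sum>k\<in>{k. k dvd m}. c k * cls D (carrier D) (dih m k) L) =
        (\<Sum>K\<in>?S. cK K * (cls D (carrier D) K L - (\<Sum>k\<in>{k. k dvd m}. E K k * cls D (carrier D) (dih m k) L)))"
        unfolding a by (simp add: right_diff_distrib sum_subtractf)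
    qed
    have "(\<lambda>L. \<Sum>K\<in>?S. cK K * (cls D (carrier D) K L - (\<Sum>k\<in>{k. k dvd m}. E K k * cls D (carrier D) (dih m k) L))) \<in> II"
      by (rule II_sum[OF fin_subgrps]) (use E in blast)
    then show "\<exists>c. ?P c" using c0 eq by (intro exI[of _ c]) simp
  next
    fix c1 c2 assume p1: "?P c1" and p2: "?P c2"
    let ?f = "\<lambda>L. (a L - (\<Sum>k\<in>{k. k dvd m}. c1 k * cls D (carrier D) (dih m k) L)) +
                - (a L - (\<Sum>k\<in>{k. k dvd m}. c2 k * cls D (carrier D) (dih m k) L))"
    have "?f \<in> II" using II_add[OF conjunct2[OF p1] II_neg[OF conjunct2[OF p2]]] .
    then have z: "?f (mu m d) = 0" if "d dvd m" for d using inv_mu[OF _ that] unfolding II_def by blast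
    have "(\<Sum>k\<in>{k. k dvd m}. (c2 k - c1 k) * cls D (carrier D) (dih m k) (mu m d)) = 0" if "d dvd m" for d
      using z[OF that] by (simp add: left_diff_distrib sum_subtractf)
    then have "c2 k - c1 k = 0" if "k dvd m" for k using tri[of "\<lambda>k. c2 k - c1 k"] that by blast
    then have dd: "c1 k = c2 k" if "k dvd m" for k using that by fastforce
    show "c1 = c2"
    proof
      fix k show "c1 k = c2 k" using dd[of k] p1 p2 by (cases "k dvd m") auto
    qed
  qed
qed

end


theorem corollary8p20:
  fixes m :: nat
  assumes "odd m"
  defines "G \<equiv> dihedral m"
  defines "I \<equiv> {f. (carrier G, f) \<in>
              mackey_ideal G (\<lambda>L. 2 * cls G (carrier G) (carrier G) L - cls G (carrier G) (mu m m) L)}"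
  shows "(\<forall>a \<in> burnside G (carrier G). \<exists>!c :: nat \<Rightarrow> int. (\<forall>k. \<not> k dvd m \<longrightarrow> c k = 0) \<and>
            (\<lambda>L. a L - (\<Sum>k\<in>{k. k dvd m}. c k * cls G (carrier G) (dih m k) L)) \<in> I)
       \<and> (\<forall>k. k dvd m \<longrightarrow> (\<lambda>L. cls G (carrier G) (mu m k) L - 2 * cls G (carrier G) (dih m k) L) \<in> I)"
proof -
  interpret dihm m by unfold_locales (rule assms(1))
  have II_eq: "I = II" unfolding I_def II_def x0_def G_def ..
  show ?thesis unfolding II_eq unfolding G_def by (rule main)
qed

end
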